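(* Let $\mathcal M=(V,E,c_V,L,\Theta)$ be a molecular graph and $\mathcal C_{\mathcal M}$ its conformational space. Suppose $\varphi,\psi\in\mathcal C_{\mathcal M}$ and $(v,w_1,w_2,w_3)\in E_3$ satisfy $O_\varphi(v,w_1,w_2,w_3)=-O_\psi(v,w_1,w_2,w_3)\neq 0$. Then $\varphi$ and $\psi$ lie in different path components of $\mathcal C_{\mathcal M}$. In particular, if $\mathcal C_{\mathcal M}\neq\emptyset$ and $\mathcal M$ is not planar, then $\mathcal C_{\mathcal M}$ is not path connected.
   Context: A molecular graph is a tuple $\mathcal M=(V,E,c_V,L,\Theta)$ where: $V$ is a finite set; $E\subseteq V\times V$ satisfies $(v,v)\notin E$ and $(v,w)\in E\iff (w,v)\in E$; $c_V:V\to\mathbb N$ is arbitrary; $L:E\to(0,\infty)$ with $L(v,w)=L(w,v)$; and $\Theta:E_2\to(0,\pi]$ with $\Theta(v,w_1,w_2)=\Theta(v,w_2,w_1)$, where $E_2=\{(v,w_1,w_2)\in V^3: (v,w_1),(v,w_2)\in E,\ w_1\neq w_2\}$. The geometric realisation of $\mathcal M$ is the metric graph obtained by gluing a segment $[0,L(e)]$ for each edge $e$ along the vertices. A configuration (embedding) of $\mathcal M$ is an injective continuous map $\varphi$ from the geometric realisation into $\mathbb R^3$ such that (i) the restriction of $\varphi$ to each edge is an isometric embedding, and (ii) for each $(v,w_1,w_2)\in E_2$ the angle at $\varphi(v)$ between the segments to $\varphi(w_1)$ and $\varphi(w_2)$ equals $\Theta(v,w_1,w_2)$. Such $\varphi$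 is determined by $(\varphi(v_1),\dots,\varphi(v_n))\in\mathbb R^{3n}$ where $V=\{v_1,\dots,v_n\}$; the conformational space $\mathcal C_{\mathcal M}$ is the set of all configurations, topologised as a subspace of $\mathbb R^{3n}$ via this injection. Let $E_3=\{(v,w_1,w_2,w_3)\in V^4:(v,w_i)\in E \text{ for } i=1,2,3,\ w_i\neq w_j \text{ for } i\neq j\}$. The orientation of $\varphi$ is $O_\varphi:E_3\to\{-1,0,1\}$, $O_\varphi(v,w_1,w_2,w_3)=\operatorname{sign}\big((\varphi(w_1)-\varphi(v))\cdot[(\varphi(w_2)-\varphi(v))\times(\varphi(w_3)-\varphi(v))]\big)$. A tuple in $E_3$ is planar if $O_\varphi$ vanishes on it for every (equivalently some) $\varphi\in\mathcal C_{\mathcal M}$, and $\mathcal M$ is planar if every tuple of $E_3$ is planar. *)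

theory Defs
  imports "HOL-Analysis.Analysis" "HOL-Analysis.Cross3"
begin

(* Vertex set V is the (finite) universe of the type 'v. A configuration is recorded by the
   vertex positions, i.e. an element of (real^3)^'v = R^{3n}, with the subspace topology. *)

definition vangle :: "real^3 \<Rightarrow> real^3 \<Rightarrow> real" where
  "vangle u w = arccos ((u \<bullet> w) / (norm u * norm w))"

definition E2 :: "('v \<times> 'v) set \<Rightarrow> ('v \<times> 'v \<times> 'v) set" where
  "E2 E = {(v, w1, w2). (v, w1) \<in> E \<and> (v, w2) \<in> E \<and> w1 \<noteq> w2}"

definition E3 :: "('v \<times> 'v) set \<Rightarrow> ('v \<times> 'v \<times> 'v \<times> 'v) set" where
  "E3 E = {(v, w1, w2, w3). (v, w1) \<in> E \<and> (v, w2) \<in> E \<and> (v, w3) \<in> E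
             \<and> w1 \<noteq> w2 \<and> w1 \<noteq> w3 \<and> w2 \<noteq> w3}"

definition molecular_graph ::
  "('v::finite \<times> 'v) set \<Rightarrow> ('v \<Rightarrow> nat) \<Rightarrow> ('v \<Rightarrow> 'v \<Rightarrow> real) \<Rightarrow> ('v \<Rightarrow> 'v \<Rightarrow> 'v \<Rightarrow> real) \<Rightarrow> bool"
where
  "molecular_graph E cV L \<Theta> \<longleftrightarrow>
     (\<forall>v. (v, v) \<notin> E) \<and> (\<forall>v w. (v, w) \<in> E \<longleftrightarrow> (w, v) \<in> E) \<and>
     (\<forall>(v, w) \<in> E. L v w > 0 \<and> L v w = L w v) \<and>
     (\<forall>(v, w1, w2) \<in> E2 E. 0 < \<Theta> v w1 w2 \<and> \<Theta> v w1 w2 \<le> pi \<and> \<Theta> v w1 w2 = \<Theta> v w2 w1)"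

text \<open>Geometric realisation: points are vertices (Inl v) or interior points of edges
  (Inr (v, w, t)) at distance t from v along the edge (v,w), with 0 < t < L v w.\<close>

definition realisation_pts :: "('v \<times> 'v) set \<Rightarrow> ('v \<Rightarrow> 'v \<Rightarrow> real) \<Rightarrow> ('v + ('v \<times> 'v \<times> real)) set" where
  "realisation_pts E L = range Inl \<union> {Inr (v, w, t) | v w t. (v, w) \<in> E \<and> 0 < t \<and> t < L v w}"

definition same_pt :: "('v \<Rightarrow> 'v \<Rightarrow> real) \<Rightarrow> ('v + ('v \<times> 'v \<times> real)) \<Rightarrow> ('v + ('v \<times> 'v \<times> real)) \<Rightarrow> bool" where
  "same_pt L x y \<longleftrightarrow> x = y \<or> (\<exists>v w t. x = Inr (v, w, t) \<and> y = Inr (w, v, L v w - t))"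

text \<open>The map on the realisation induced by vertex positions p: each edge is mapped by the
  affine (unit-speed, once the edge lengths are correct) parametrisation of the segment.\<close>

fun realisation_map :: "('v \<Rightarrow> 'v \<Rightarrow> real) \<Rightarrow> real^3^'v \<Rightarrow> ('v + ('v \<times> 'v \<times> real)) \<Rightarrow> real^3" where
  "realisation_map L p (Inl v) = p $ v"
| "realisation_map L p (Inr (v, w, t)) = p $ v + (t / L v w) *\<^sub>R (p $ w - p $ v)"

definition configuration ::
  "('v::finite \<times> 'v) set \<Rightarrow> ('v \<Rightarrow> 'v \<Rightarrow> real) \<Rightarrow> ('v \<Rightarrow> 'v \<Rightarrow> 'v \<Rightarrow> real) \<Rightarrow> real^3^'v \<Rightarrow> bool"
where
  "configuration E L \<Theta> p \<longleftrightarrow>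
     (\<forall>(v, w) \<in> E. dist (p $ v) (p $ w) = L v w) \<and>
     (\<forall>(v, w1, w2) \<in> E2 E. vangle (p $ w1 - p $ v) (p $ w2 - p $ v) = \<Theta> v w1 w2) \<and>
     (\<forall>x \<in> realisation_pts E L. \<forall>y \<in> realisation_pts E L.
         realisation_map L p x = realisation_map L p y \<longrightarrow> same_pt L x y)"

definition conf_space ::
  "('v::finite \<times> 'v) set \<Rightarrow> ('v \<Rightarrow> 'v \<Rightarrow> real) \<Rightarrow> ('v \<Rightarrow> 'v \<Rightarrow> 'v \<Rightarrow> real) \<Rightarrow> (real^3^'v) set"
where
  "conf_space E L \<Theta> = {p. configuration E L \<Theta> p}"

definition orientation :: "real^3^'v \<Rightarrow> 'v \<Rightarrow> 'v \<Rightarrow> 'v \<Rightarrow> 'v \<Rightarrow> real" where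
  "orientation p v w1 w2 w3 =
     sgn ((p $ w1 - p $ v) \<bullet> cross3 (p $ w2 - p $ v) (p $ w3 - p $ v))"

definition planar_tuple ::
  "('v::finite \<times> 'v) set \<Rightarrow> ('v \<Rightarrow> 'v \<Rightarrow> real) \<Rightarrow> ('v \<Rightarrow> 'v \<Rightarrow> 'v \<Rightarrow> real) \<Rightarrow> 'v \<times> 'v \<times> 'v \<times> 'v \<Rightarrow> bool"
where
  "planar_tuple E L \<Theta> t \<longleftrightarrow>
     (\<forall>p \<in> conf_space E L \<Theta>. case t of (v, w1, w2, w3) \<Rightarrow> orientation p v w1 w2 w3 = 0)"

definition planar_mg ::
  "('v::finite \<times> 'v) set \<Rightarrow> ('v \<Rightarrow> 'v \<Rightarrow> real) \<Rightarrow> ('v \<Rightarrow> 'v \<Rightarrow> 'v \<Rightarrow> real) \<Rightarrow> bool"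
where
  "planar_mg E L \<Theta> \<longleftrightarrow> (\<forall>t \<in> E3 E. planar_tuple E L \<Theta> t)"

end

theory Submission
  imports Defs
begin

lemma gram3:
  fixes a b c :: "real^3"
  shows "(a \<bullet> cross3 b c)^2 =
    (a\<bullet>a)*((b\<bullet>b)*(c\<bullet>c) - (b\<bullet>c)^2) - (a\<bullet>b)*((a\<bullet>b)*(c\<bullet>c) - (b\<bullet>c)*(a\<bullet>c))
    + (a\<bullet>c)*((a\<bullet>b)*(b\<bullet>c) - (b\<bullet>b)*(a\<bullet>c))"
  unfolding cross3_def inner_vec_def sum_3 by (simp add: power2_eq_square vector_def algebra_simps)

lemma norm_edge:
  assumes "molecular_graph E cV L \<Theta>" "p \<in> conf_space E L \<Theta>" "(v, w) \<in> E"
  shows "norm (p $ w - p $ v) = L v w"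
proof -
  have "dist (p $ v) (p $ w) = L v w" using assms(2,3) unfolding conf_space_def configuration_def by auto
  thus ?thesis by (simp add: dist_norm norm_minus_commute)
qed

lemma inner_self_edge:
  assumes "molecular_graph E cV L \<Theta>" "p \<in> conf_space E L \<Theta>" "(v, w) \<in> E"
  shows "(p $ w - p $ v) \<bullet> (p $ w - p $ v) = (L v w)^2"
  using norm_edge[OF assms] by (metis power2_norm_eq_inner)

lemma inner_edge:
  assumes mg: "molecular_graph E cV L \<Theta>" and p: "p \<in> conf_space E L \<Theta>"
    and e: "(v, w1) \<in> E" "(v, w2) \<in> E" "w1 \<noteq> w2"
  shows "(p $ w1 - p $ v) \<bullet> (p $ w2 - p $ v) = L v w1 * L v w2 * cos (\<Theta> v w1 w2)"
proof -
  define a where "a = p $ w1 - p $ v"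
  define b where "b = p $ w2 - p $ v"
  have na: "norm a = L v w1" unfolding a_def by (rule norm_edge[OF mg p e(1)])
  have nb: "norm b = L v w2" unfolding b_def by (rule norm_edge[OF mg p e(2)])
  have pos: "L v w1 > 0" "L v w2 > 0" using mg e unfolding molecular_graph_def by auto
  have "(v, w1, w2) \<in> E2 E" using e unfolding E2_def by auto
  hence ang: "vangle a b = \<Theta> v w1 w2" using p unfolding a_def b_def conf_space_def configuration_def by auto
  have npos: "norm a * norm b > 0" using na nb pos by simp
  have cs: "\<bar>a \<bullet> b\<bar> \<le> norm a * norm b" by (rule Cauchy_Schwarz_ineq2)
  hence "-1 \<le> (a \<bullet> b) / (norm a * norm b)" "(a \<bullet> b) / (norm a * norm b) \<le> 1"
    using npos by (auto simp: divide_simps abs_le_iff)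
  hence "cos (vangle a b) = (a \<bullet> b) / (norm a * norm b)" unfolding vangle_def by (simp add: cos_arccos)
  hence "a \<bullet> b = norm a * norm b * cos (\<Theta> v w1 w2)" using npos ang by (auto simp: divide_simps mult.commute split: if_splits)
  thus ?thesis using na nb unfolding a_def b_def by simp
qed

definition triple :: "real^3^'v \<Rightarrow> 'v \<Rightarrow> 'v \<Rightarrow> 'v \<Rightarrow> 'v \<Rightarrow> real" where
  "triple p v w1 w2 w3 = (p $ w1 - p $ v) \<bullet> cross3 (p $ w2 - p $ v) (p $ w3 - p $ v)"

lemma triple_sq:
  assumes mg: "molecular_graph E cV L \<Theta>" and p: "p \<in> conf_space E L \<Theta>"
    and t: "(v, w1, w2, w3) \<in> E3 E"
  shows "(triple p v w1 w2 w3)^2 =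
    (L v w1)^2*((L v w2)^2*(L v w3)^2 - (L v w2 * L v w3 * cos (\<Theta> v w2 w3))^2)
    - (L v w1 * L v w2 * cos (\<Theta> v w1 w2))*((L v w1 * L v w2 * cos (\<Theta> v w1 w2))*(L v w3)^2
        - (L v w2 * L v w3 * cos (\<Theta> v w2 w3))*(L v w1 * L v w3 * cos (\<Theta> v w1 w3)))
    + (L v w1 * L v w3 * cos (\<Theta> v w1 w3))*((L v w1 * L v w2 * cos (\<Theta> v w1 w2))*(L v w2 * L v w3 * cos (\<Theta> v w2 w3))
        - (L v w2)^2*(L v w1 * L v w3 * cos (\<Theta> v w1 w3)))"
proof -
  have e: "(v, w1) \<in> E" "(v, w2) \<in> E" "(v, w3) \<in> E" "w1 \<noteq> w2" "w1 \<noteq> w3" "w2 \<noteq> w3"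
    using t unfolding E3_def by auto
  have "(w2, v) \<in> E" "(w3, v) \<in> E" using e mg unfolding molecular_graph_def by blast+
  show ?thesis unfolding triple_def gram3
    inner_self_edge[OF mg p e(1)] inner_self_edge[OF mg p e(2)] inner_self_edge[OF mg p e(3)]
    inner_edge[OF mg p e(1) e(2) e(4)] inner_edge[OF mg p e(1) e(3) e(5)] inner_edge[OF mg p e(2) e(3) e(6)]
    by simp
qed

lemma neg_conf:
  assumes p: "p \<in> conf_space E L \<Theta>"
  shows "- p \<in> conf_space E L \<Theta>"
proof -
  have rm: "realisation_map L (- p) x = - realisation_map L p x" for x
    by (cases x) (auto simp: algebra_simps)
  have ang: "vangle (- a) (- b) = vangle a b" for a b :: "real^3" unfolding vangle_def by simp
  have c: "configuration E L \<Theta> p" using p unfolding conf_space_def by simp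
  have 1: "\<forall>(v, w) \<in> E. dist ((- p) $ v) ((- p) $ w) = L v w"
    using c unfolding configuration_def by (auto simp: dist_minus)
  have 2: "\<forall>(v, w1, w2) \<in> E2 E. vangle ((- p) $ w1 - (- p) $ v) ((- p) $ w2 - (- p) $ v) = \<Theta> v w1 w2"
  proof (intro ballI, clarify)
    fix v w1 w2 assume "(v, w1, w2) \<in> E2 E"
    hence "vangle (p $ w1 - p $ v) (p $ w2 - p $ v) = \<Theta> v w1 w2"
      using c unfolding configuration_def by auto
    moreover have "(- p) $ w1 - (- p) $ v = - (p $ w1 - p $ v)" "(- p) $ w2 - (- p) $ v = - (p $ w2 - p $ v)"
      by simp_all
    ultimately show "vangle ((- p) $ w1 - (- p) $ v) ((- p) $ w2 - (- p) $ v) = \<Theta> v w1 w2"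
      by (simp only: ang)
  qed
  have 3: "\<forall>x \<in> realisation_pts E L. \<forall>y \<in> realisation_pts E L.
         realisation_map L (- p) x = realisation_map L (- p) y \<longrightarrow> same_pt L x y"
    using c unfolding configuration_def rm neg_equal_iff_equal by blast
  show ?thesis using 1 2 3 unfolding conf_space_def configuration_def by blast
qed

lemma orient_neg: "orientation (- p) v w1 w2 w3 = - orientation p v w1 w2 w3"
proof -
  have d: "(- p) $ w - (- p) $ v = - (p $ w - p $ v)" for w by simp
  have c: "cross3 (- a) (- b) = cross3 a b" for a b :: "real^3"
    unfolding cross3_def by (simp add: vec_eq_iff vector_def)
  show ?thesis unfolding orientation_def d c inner_minus_left sgn_minus ..
qed

theorem mainTheorem1:
  fixes E :: "('v::finite \<times> 'v) set" and cV :: "'v \<Rightarrow> nat"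
    and L :: "'v \<Rightarrow> 'v \<Rightarrow> real" and \<Theta> :: "'v \<Rightarrow> 'v \<Rightarrow> 'v \<Rightarrow> real"
  assumes "molecular_graph E cV L \<Theta>"
  shows "(\<forall>\<phi> \<psi> v w1 w2 w3.
            \<phi> \<in> conf_space E L \<Theta> \<and> \<psi> \<in> conf_space E L \<Theta> \<and> (v, w1, w2, w3) \<in> E3 E \<and>
            orientation \<phi> v w1 w2 w3 = - orientation \<psi> v w1 w2 w3 \<and>
            orientation \<phi> v w1 w2 w3 \<noteq> 0
            \<longrightarrow> \<not> path_component (conf_space E L \<Theta>) \<phi> \<psi>)
       \<and> (conf_space E L \<Theta> \<noteq> {} \<and> \<not> planar_mg E L \<Theta> \<longrightarrow> \<not> path_connected (conf_space E L \<Theta>))"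
proof -
  let ?S = "conf_space E L \<Theta>"
  have part1: "\<not> path_component ?S \<phi> \<psi>"
    if h: "\<phi> \<in> ?S" "\<psi> \<in> ?S" "(v, w1, w2, w3) \<in> E3 E"
      "orientation \<phi> v w1 w2 w3 = - orientation \<psi> v w1 w2 w3" "orientation \<phi> v w1 w2 w3 \<noteq> 0"
    for \<phi> \<psi> v w1 w2 w3
  proof
    assume "path_component ?S \<phi> \<psi>"
    then obtain g where g: "path g" "path_image g \<subseteq> ?S" "pathstart g = \<phi>" "pathfinish g = \<psi>"
      unfolding path_component_def by blast
    define f where "f t = triple (g t) v w1 w2 w3" for t
    have cont: "continuous_on {0..1} f" using g(1) unfolding f_def triple_def path_def
      by (intro continuous_intros continuous_on_cross) auto
    have gS: "g t \<in> ?S" if "t \<in> {0..1}" for t using g(2) that unfolding path_image_def by auto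
    have sq: "(f t)^2 = (f 0)^2" if "t \<in> {0..1}" for t
      unfolding f_def using triple_sq[OF assms gS[OF that] h(3)] triple_sq[OF assms gS[of 0] h(3)] by simp
    have f0: "f 0 = triple \<phi> v w1 w2 w3" "f 1 = triple \<psi> v w1 w2 w3"
      using g(3,4) unfolding f_def pathstart_def pathfinish_def by auto
    have o: "sgn (f 0) = - sgn (f 1)" "sgn (f 0) \<noteq> 0"
      using h(4,5) f0 unfolding orientation_def triple_def by auto
    have "\<exists>t. 0 \<le> t \<and> t \<le> 1 \<and> f t = 0"
    proof (cases "f 0 > 0")
      case True
      hence "f 1 < 0" using o by (auto simp: sgn_if split: if_splits)
      thus ?thesis using True cont IVT2'[where f=f and a=0 and b=1 and y=0] by auto
    next
      case False
      hence "f 0 < 0" using o by (auto simp: sgn_if split: if_splits)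
      moreover hence "f 1 > 0" using o by (auto simp: sgn_if split: if_splits)
      ultimately show ?thesis using cont IVT'[where f=f and a=0 and b=1 and y=0] by auto
    qed
    then obtain t where "0 \<le> t" "t \<le> 1" "f t = 0" by blast
    hence "(f 0)^2 = 0" using sq[of t] by simp
    thus False using o by simp
  qed
  have part2: "\<not> path_connected ?S" if np: "\<not> planar_mg E L \<Theta>"
  proof -
    obtain v w1 w2 w3 p where t: "(v, w1, w2, w3) \<in> E3 E" and p: "p \<in> ?S"
      and o: "orientation p v w1 w2 w3 \<noteq> 0"
    proof -
      from np obtain tp where tp: "tp \<in> E3 E" "\<not> planar_tuple E L \<Theta> tp"
        unfolding planar_mg_def by blast
      obtain v w1 w2 w3 where "tp = (v, w1, w2, w3)" by (cases tp) auto
      thus ?thesis using tp that unfolding planar_tuple_def by auto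
    qed
    have q: "- p \<in> ?S" by (rule neg_conf[OF p])
    have "orientation p v w1 w2 w3 = - orientation (- p) v w1 w2 w3"
      by (simp add: orient_neg)
    hence "\<not> path_component ?S p (- p)" using part1[OF p q t _ o] by blast
    thus ?thesis using p q unfolding path_connected_component by blast
  qed
  show ?thesis using part1 part2 by blast
qed

end
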